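(* Let $R$ be an associative ring with identity and involution $*$, and let $a\in R^{\#}\cap R^{\dagger}$. Then $a\in R^{SEP}$ if and only if there exists $x\in\rho_a=\{a,\ a^{\#},\ a^{\dagger},\ a^*,\ (a^{\dagger})^*,\ (a^{\#})^*,\ (a^{\#})^{\dagger},\ (a^{\dagger})^{\#}\}$ such that $a(a^{\#})^*a^{\dagger}$ and $a^{\dagger}a^2$ are left $x$-equivalent, i.e. $x\,a(a^{\#})^*a^{\dagger}=x\,a^{\dagger}a^2$.
   Context: An involution on $R$ is a map $x\mapsto x^*$ with $(x^* )^*=x$, $(x+y)^*=x^*+y^*$, $(xy)^*=y^*x^*$. An element $a$ is Moore–Penrose invertible if there is $b$ with $aba=a$, $bab=b$, $(ab)^*=ab$, $(ba)^*=ba$; such $b$ is unique, denoted $a^{\dagger}$, and $R^{\dagger}$ is the set of such $a$. An element $a$ is group invertible if there is $b$ with $aba=a$, $bab=b$, $ab=ba$; such $b$ is unique, denoted $a^{\#}$, and $R^{\#}$ is the set of such $a$. For $a\in R^{\#}\cap R^{\dagger}$, the elements $a^{\#}$ is Moore–Penrose invertible and $a^{\dagger}$ is group invertible, so $(a^{\#})^{\dagger}$ and $(a^{\dagger})^{\#}$ exist. For $a\in R^{\#}\cap R^{\dagger}$, $a$ is SEP if $a^*=a^{\dagger}=a^{\#}$; $R^{SEP}$ denotes the set of SEP elements. For $x,b,c\in R$, $b$ and $c$ are left $x$-equivalent if $xb=xc$. *)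

theory Defs
  imports Main
begin

definition involution :: "('a::ring_1 \<Rightarrow> 'a) \<Rightarrow> bool" where
  "involution s \<longleftrightarrow> (\<forall>x. s (s x) = x) \<and> (\<forall>x y. s (x + y) = s x + s y)
     \<and> (\<forall>x y. s (x * y) = s y * s x)"

definition is_mp_inverse :: "('a::ring_1 \<Rightarrow> 'a) \<Rightarrow> 'a \<Rightarrow> 'a \<Rightarrow> bool" where
  "is_mp_inverse s a b \<longleftrightarrow> a * b * a = a \<and> b * a * b = b \<and> s (a * b) = a * b \<and> s (b * a) = b * a"

definition mp_invertible :: "('a::ring_1 \<Rightarrow> 'a) \<Rightarrow> 'a \<Rightarrow> bool" where
  "mp_invertible s a \<longleftrightarrow> (\<exists>b. is_mp_inverse s a b)"

definition mp_inv :: "('a::ring_1 \<Rightarrow> 'a) \<Rightarrow> 'a \<Rightarrow> 'a" where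
  "mp_inv s a = (THE b. is_mp_inverse s a b)"

definition is_group_inverse :: "'a::ring_1 \<Rightarrow> 'a \<Rightarrow> bool" where
  "is_group_inverse a b \<longleftrightarrow> a * b * a = a \<and> b * a * b = b \<and> a * b = b * a"

definition group_invertible :: "'a::ring_1 \<Rightarrow> bool" where
  "group_invertible a \<longleftrightarrow> (\<exists>b. is_group_inverse a b)"

definition group_inv :: "'a::ring_1 \<Rightarrow> 'a" where
  "group_inv a = (THE b. is_group_inverse a b)"

definition SEP :: "('a::ring_1 \<Rightarrow> 'a) \<Rightarrow> 'a \<Rightarrow> bool" where
  "SEP s a \<longleftrightarrow> group_invertible a \<and> mp_invertible s a \<and>
     s a = mp_inv s a \<and> mp_inv s a = group_inv a"

definition left_equiv :: "'a::ring_1 \<Rightarrow> 'a \<Rightarrow> 'a \<Rightarrow> bool" where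
  "left_equiv x b c \<longleftrightarrow> x * b = x * c"

end

theory Submission
  imports Defs
begin

lemma inv_facts:
  fixes s :: "'a::ring_1 \<Rightarrow> 'a"
  assumes "involution s"
  shows inv_ss: "s (s x) = x" and inv_mult: "s (x * y) = s y * s x"
    and inv_add: "s (x + y) = s x + s y"
  using assms unfolding involution_def by auto

lemma inv_diff:
  fixes s :: "'a::ring_1 \<Rightarrow> 'a"
  assumes I: "involution s"
  shows "s (x - y) = s x - s y"
proof -
  have "s (x - y) + s y = s x" using inv_add[OF I, of "x - y" y] by simp
  then show ?thesis by (simp add: eq_diff_eq)
qed

lemma mp_unique:
  fixes s :: "'a::ring_1 \<Rightarrow> 'a"
  assumes I: "involution s" and B: "is_mp_inverse s a b" and C: "is_mp_inverse s a c"
  shows "b = c"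
proof -
  note sm = inv_mult[OF I]
  have b1: "a*b*a = a" "b*a*b = b" "s (a*b) = a*b" "s (b*a) = b*a" using B unfolding is_mp_inverse_def by auto
  have c1: "a*c*a = a" "c*a*c = c" "s (a*c) = a*c" "s (c*a) = c*a" using C unfolding is_mp_inverse_def by auto
  have "b = b * s (a*b)" using b1 by (simp add: mult.assoc)
  also have "\<dots> = b * s b * s a" using sm by (simp add: mult.assoc)
  also have "s a = s a * (a*c)" using sm[of "a*c" a] c1 by simp
  also have "b * s b * (s a * (a * c)) = b * s (a*b) * a * c" using sm[of a b] by (simp add: mult.assoc)
  also have "\<dots> = b*a*c" using b1 by (simp add: mult.assoc)
  finally have 1: "b = b*a*c" .
  have "c = s (c*a) * c" using c1 by (simp add: mult.assoc)
  also have "\<dots> = s a * s c * c" using sm by simp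
  also have "s a = (b*a) * s a" using sm[of a "b*a"] b1 by (simp add: mult.assoc)
  also have "(b*a) * s a * s c * c = b * a * s (c*a) * c" using sm[of c a] by (simp add: mult.assoc)
  also have "\<dots> = b*a*c" using c1 by (simp add: mult.assoc)
  finally show ?thesis using 1 by simp
qed

lemma mp_inv_prop:
  fixes s :: "'a::ring_1 \<Rightarrow> 'a"
  assumes I: "involution s" and "mp_invertible s a"
  shows "is_mp_inverse s a (mp_inv s a)"
proof -
  obtain b where b: "is_mp_inverse s a b" using assms unfolding mp_invertible_def by auto
  show ?thesis unfolding mp_inv_def
    by (rule theI[of _ b]) (use b mp_unique[OF I] in auto)
qed

lemma group_unique:
  fixes a :: "'a::ring_1"
  assumes B: "is_group_inverse a b" and C: "is_group_inverse a c"
  shows "b = c"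
proof -
  have b1: "a*b*a = a" "b*a*b = b" "a*b = b*a" using B unfolding is_group_inverse_def by auto
  have c1: "a*c*a = a" "c*a*c = c" "a*c = c*a" using C unfolding is_group_inverse_def by auto
  have e1: "a*b = (a*b)*(a*c)" by (metis b1(3) c1(1) c1(3) mult.assoc)
  have e2: "a*c = (a*c)*(a*b)" by (metis c1(3) b1(1) b1(3) mult.assoc)
  have e3: "a*c = (a*b)*(a*c)" by (metis b1(1) mult.assoc)
  have e4: "a*b = (a*c)*(a*b)" by (metis c1(1) mult.assoc)
  have ab: "a*b = a*c" using e1 e2 e3 e4 by (metis b1(3) c1(3) mult.assoc)
  have "b = b*(a*c)" using b1 ab by (simp add: mult.assoc)
  moreover have "c = (a*b)*c" using c1 ab by (metis mult.assoc)
  ultimately show ?thesis using b1(3) by (simp add: mult.assoc)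
qed

lemma group_inv_prop:
  fixes a :: "'a::ring_1"
  assumes "group_invertible a"
  shows "is_group_inverse a (group_inv a)"
proof -
  obtain b where b: "is_group_inverse a b" using assms unfolding group_invertible_def by auto
  show ?thesis unfolding group_inv_def
    by (rule theI[of _ b]) (use b group_unique in auto)
qed


lemma EP_to_SEP:
  fixes s :: "'a::ring_1 \<Rightarrow> 'a"
  assumes I: "involution s" and M: "is_mp_inverse s a m" and G: "is_group_inverse a g"
    and EP: "a = a*a*m" and EQ: "s g * m = m*m*a*a"
  shows "s a = m \<and> m = g"
proof -
  note sm = inv_mult[OF I]
  have m1: "a*m*a = a" "m*a*m = m" "s (a*m) = a*m" "s (m*a) = m*a" using M unfolding is_mp_inverse_def by auto
  have g1: "a*g*a = a" "g*a*g = g" "a*g = g*a" using G unfolding is_group_inverse_def by auto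
  have gaa: "g*a*a = a" by (metis g1(1) g1(3) mult.assoc)
  have ga: "g*a = a*m" by (metis EP gaa mult.assoc)
  have "m*a = (m*a)*(g*a)" by (metis g1(1) g1(3) mult.assoc)
  hence "s (m*a) = s (g*a) * s (m*a)" using sm[of "m*a" "g*a"] by metis
  hence "m*a = (g*a)*(m*a)" using m1 ga by simp
  hence ma: "m*a = g*a" by (metis m1(1) mult.assoc)
  have "m = g*a*m" using m1(2) ma by metis
  also have "\<dots> = g*(g*a)" using ga by (metis mult.assoc)
  also have "\<dots> = g" by (metis g1(2) g1(3) mult.assoc)
  finally have mg: "m = g" .
  have "s m * m = m*(m*a)*a" using EQ mg by (simp add: mult.assoc)
  also have "\<dots> = m*a" using ma ga m1(2) by (metis g1(3) mult.assoc)
  finally have smm: "s m * m = m*a" .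
  have sasm: "s a * s m = m*a" using sm[of m a] m1 by simp
  have "m = s a * m * a" by (metis sasm smm m1(2) mult.assoc)
  also have "\<dots> = s a * (a*m)" using ma ga g1(3) by (simp add: mult.assoc)
  also have "\<dots> = s a" using sm[of "a*m" a] m1 by simp
  finally show ?thesis using mg by simp
qed


lemma basic_facts:
  fixes s :: "'a::ring_1 \<Rightarrow> 'a"
  assumes I: "involution s" and M: "is_mp_inverse s a m" and G: "is_group_inverse a g"
  shows "g*m*a = g" "m*a*s g = s g" "s a = s a * a * m" "m = s a * s m * m"
    "s a = s g * s a * s a" "s m * s a = a*m" "s a * s m = m*a" "g*g*a = g" "g*a*a = a" "a*a*g = a"
    "a*m*g = g" "g = a*g*g"
proof -
  note sm = inv_mult[OF I]
  have m1: "a*m*a = a" "m*a*m = m" "s (a*m) = a*m" "s (m*a) = m*a" using M unfolding is_mp_inverse_def by auto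
  have g1: "a*g*a = a" "g*a*g = g" "a*g = g*a" using G unfolding is_group_inverse_def by auto
  show gga: "g*g*a = g" by (metis g1(2) g1(3) mult.assoc)
  show gaa: "g*a*a = a" by (metis g1(1) g1(3) mult.assoc)
  show "a*a*g = a" by (metis g1(1) g1(3) mult.assoc)
  show ggg: "g = a*g*g" by (metis g1(2) g1(3) mult.assoc)
  show gma: "g*m*a = g" by (metis gga m1(1) mult.assoc)
  show "a*m*g = g" by (metis ggg m1(1) mult.assoc)
  have "s g = s (g*m*a)" using gma by simp
  also have "\<dots> = s (m*a) * s g" using sm[of "g" "m*a"] by (simp add: mult.assoc)
  finally show "m*a*s g = s g" using m1 by simp
  have "s a = s (a*m*a)" using m1 by simp
  also have "\<dots> = s a * s (a*m)" using sm[of "a*m" a] by simp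
  finally show "s a = s a * a * m" using m1 by (simp add: mult.assoc)
  have "m = s (m*a) * m" using m1 by simp
  also have "\<dots> = s a * s m * m" using sm by simp
  finally show "m = s a * s m * m" .
  have "s a = s (g*a*a)" using gaa by simp
  also have "\<dots> = s a * s a * s g" using sm by (simp add: mult.assoc)
  finally have "s a = s a * s a * s g" .
  have "s a = s (a*a*g)" using \<open>a*a*g = a\<close> by simp
  also have "\<dots> = s g * s a * s a" using sm by (simp add: mult.assoc)
  finally show "s a = s g * s a * s a" .
  show "s m * s a = a*m" using sm[of a m] m1 by simp
  show "s a * s m = m*a" using sm[of m a] m1 by simp
qed

lemma coreM:
  fixes s :: "'a::ring_1 \<Rightarrow> 'a"
  assumes I: "involution s" and M: "is_mp_inverse s a m" and G: "is_group_inverse a g"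
    and EQ: "a * s g * m = a*m*m*a*a"
  shows "s a = m \<and> m = g"
proof -
  note sm = inv_mult[OF I]
  note bf = basic_facts[OF I M G]
  have m1: "a*m*a = a" "m*a*m = m" "s (a*m) = a*m" "s (m*a) = m*a" using M unfolding is_mp_inverse_def by auto
  have g1: "a*g*a = a" "g*a*g = g" "a*g = g*a" using G unfolding is_group_inverse_def by auto
  have "s g * m = m*a * s g * m" using bf(2) by simp
  also have "\<dots> = m*(a*m*m*a*a)" using EQ by (simp add: mult.assoc)
  also have "\<dots> = m*m*a*a" using m1(2) by (metis mult.assoc)
  finally have EQ2: "s g * m = m*m*a*a" .
  define w where "w = a*a - a*a*a*m"
  have "m*m*a*a = s g * (m*a*m)" using EQ2 m1(2) by simp
  also have "\<dots> = m*m*a*a*a*m" using EQ2 by (metis mult.assoc)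
  finally have "m*m*(a*a) = m*m*(a*a*a*m)" by (simp add: mult.assoc)
  hence mmw: "m*m*w = 0" unfolding w_def by (simp add: right_diff_distrib)
  have "s a * m * w = s a * a * m * m * w" using bf(3) by metis
  also have "\<dots> = 0" using mmw by (simp add: mult.assoc)
  finally have "s a * m * w = 0" .
  hence "s a * (s a * s m * m) * w = 0" using bf(4) by metis
  hence "s g * s a * s a * s m * m * w = 0" by (simp add: mult.assoc)
  hence "s a * s m * m * w = 0" using bf(5) by (metis mult.assoc)
  hence mw: "m * w = 0" using bf(4) by metis
  have "a*m*w = w" unfolding w_def using m1(1) by (simp add: right_diff_distrib mult.assoc) (metis mult.assoc)
  hence "w = 0" using mw by (simp add: mult.assoc)
  hence "a*a = a*a*a*m" unfolding w_def by simp
  hence "g*(a*a) = g*(a*a*a*m)" by simp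
  hence EP: "a = a*a*m" using bf(9) by (metis mult.assoc)
  show ?thesis using EP_to_SEP[OF I M G EP EQ2] .
qed

lemma coreA:
  fixes s :: "'a::ring_1 \<Rightarrow> 'a"
  assumes I: "involution s" and M: "is_mp_inverse s a m" and G: "is_group_inverse a g"
    and EQ: "a * a * s g * m = a*a"
  shows "s a = m \<and> m = g"
proof -
  note bf = basic_facts[OF I M G]
  have m1: "a*m*a = a" "m*a*m = m" "s (a*m) = a*m" "s (m*a) = m*a" using M unfolding is_mp_inverse_def by auto
  have g1: "a*g*a = a" "g*a*g = g" "a*g = g*a" using G unfolding is_group_inverse_def by auto
  have A: "a * s g * m = a" using EQ bf(9) by (metis mult.assoc)
  have EP: "a = a*a*m" using A m1(2) by (metis mult.assoc)
  have ga: "g*a = a*m" by (metis EP bf(9) mult.assoc)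
  have ma: "m*a = a*m"
  proof -
    have "m*a = (m*a)*(g*a)" by (metis g1(1) g1(3) mult.assoc)
    hence "s (m*a) = s (g*a) * s (m*a)" using inv_mult[OF I, of "m*a" "g*a"] by metis
    hence "m*a = (g*a)*(m*a)" using m1 ga by simp
    thus ?thesis using ga by (metis m1(1) mult.assoc)
  qed
  have "a*m*m*a*a = a*m*(a*m)*a" using ma by (metis mult.assoc)
  also have "\<dots> = a" using m1(1) by (metis mult.assoc)
  finally show ?thesis using coreM[OF I M G] A by simp
qed


lemma mp_of_g:
  fixes s :: "'a::ring_1 \<Rightarrow> 'a"
  assumes I: "involution s" and M: "is_mp_inverse s a m" and G: "is_group_inverse a g"
  shows "mp_invertible s g"
proof -
  note bf = basic_facts[OF I M G]
  have m1: "a*m*a = a" "m*a*m = m" "s (a*m) = a*m" "s (m*a) = m*a" using M unfolding is_mp_inverse_def by auto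
  define h where "h = m*a*a*a*m"
  have "g*h = (g*m*a)*a*a*m" unfolding h_def by (simp add: mult.assoc)
  also have "\<dots> = (g*a*a)*m" using bf(1) by (simp add: mult.assoc)
  finally have gh: "g*h = a*m" using bf(9) by simp
  have "h*g = m*a*(a*a*m*g)" unfolding h_def by (simp add: mult.assoc)
  also have "a*a*m*g = a*g" using bf(11) by (simp add: mult.assoc)
  finally have "h*g = m*(a*a*g)" by (simp add: mult.assoc)
  hence hg: "h*g = m*a" using bf(10) by simp
  have 1: "g*h*g = g" using gh bf(11) by simp
  have "h*g*h = (m*a*m)*a*a*a*m" using hg unfolding h_def by (simp add: mult.assoc)
  hence 2: "h*g*h = h" using m1(2) unfolding h_def by simp
  have "is_mp_inverse s g h" unfolding is_mp_inverse_def
    using gh hg m1 1 2 by simp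
  thus ?thesis unfolding mp_invertible_def by blast
qed


lemma gi_of_m:
  fixes s :: "'a::ring_1 \<Rightarrow> 'a"
  assumes I: "involution s" and M: "is_mp_inverse s a m" and G: "is_group_inverse a g"
  shows "group_invertible m"
proof -
  note sm = inv_mult[OF I]
  note bf = basic_facts[OF I M G]
  have m1: "a*m*a = a" "m*a*m = m" "s (a*m) = a*m" "s (m*a) = m*a" using M unfolding is_mp_inverse_def by auto
  have g1: "a*g*a = a" "g*a*g = g" "a*g = g*a" using G unfolding is_group_inverse_def by auto
  define f where "f = s (g*a)"
  have "s a * f = s (g*a*a)" unfolding f_def using sm[of "g*a" a] by simp
  hence saf: "s a * f = s a" using bf(9) by simp
  have "f * s a = s (a*(g*a))" unfolding f_def using sm[of a "g*a"] by simp
  hence fsa: "f * s a = s a" using g1(1) by (simp add: mult.assoc)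
  have "m = m * s (a*m)" using m1 by (simp add: mult.assoc)
  hence "m = m * s m * s a" using sm[of a m] by (simp add: mult.assoc)
  hence mf: "m*f = m" using saf by (metis mult.assoc)
  have fm: "f*m = m" using bf(4) fsa by (metis mult.assoc)
  have "m*a*f = s (g*a*(m*a))" unfolding f_def using sm[of "g*a" "m*a"] m1(4) by simp
  also have "g*a*(m*a) = g*a" using m1(1) by (simp add: mult.assoc)
  finally have maf: "m*a*f = f" unfolding f_def .
  have "a*m*(g*a) = g*a" using m1(1) g1(3) by (metis mult.assoc)
  have "f*(a*m) = s (a*m*(g*a))" unfolding f_def using sm[of "a*m" "g*a"] m1(3) by simp
  also have "a*m*(g*a) = g*a" using m1(1) g1(3) by (metis mult.assoc)
  finally have fam: "f*a*m = f" unfolding f_def by (simp add: mult.assoc)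
  have "f*f = s (g*a*(g*a))" unfolding f_def using sm[of "g*a" "g*a"] by simp
  also have "g*a*(g*a) = g*a" using g1(2) by (metis mult.assoc)
  finally have ff: "f*f = f" unfolding f_def .
  define k where "k = f*a*f"
  have mk: "m*k = f" unfolding k_def using maf mf by (metis mult.assoc)
  have "k*m = f*a*(f*m)" unfolding k_def by (simp add: mult.assoc)
  hence km: "k*m = f" using fam fm by simp
  have 1: "m*k*m = m" using mk fm by simp
  have "k*m*k = f*f*a*f" using km unfolding k_def by (simp add: mult.assoc)
  hence 2: "k*m*k = k" using ff unfolding k_def by simp
  have "is_group_inverse m k" unfolding is_group_inverse_def
    using mk km 1 2 by simp
  thus ?thesis unfolding group_invertible_def by blast
qed


theorem theorem5p2:
  fixes s :: "'a::ring_1 \<Rightarrow> 'a" and a :: 'a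
  assumes "involution s"
    and "group_invertible a" and "mp_invertible s a"
  shows "SEP s a \<longleftrightarrow>
    (\<exists>x\<in>{a, group_inv a, mp_inv s a, s a, s (mp_inv s a), s (group_inv a),
           mp_inv s (group_inv a), group_inv (mp_inv s a)}.
       left_equiv x (a * s (group_inv a) * mp_inv s a) (mp_inv s a * a ^ 2))"
proof -
  note I = assms(1)
  define m where "m = mp_inv s a"
  define g where "g = group_inv a"
  have M: "is_mp_inverse s a m" unfolding m_def using mp_inv_prop[OF I assms(3)] .
  have G: "is_group_inverse a g" unfolding g_def using group_inv_prop[OF assms(2)] .
  note sm = inv_mult[OF I]
  note bf = basic_facts[OF I M G]
  have m1: "a*m*a = a" "m*a*m = m" "s (a*m) = a*m" "s (m*a) = m*a" using M unfolding is_mp_inverse_def by auto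
  have g1: "a*g*a = a" "g*a*g = g" "a*g = g*a" using G unfolding is_group_inverse_def by auto
  have sep: "SEP s a \<longleftrightarrow> s a = m \<and> m = g"
    unfolding SEP_def m_def g_def using assms by auto
  have H: "is_mp_inverse s g (mp_inv s g)" using mp_inv_prop[OF I mp_of_g[OF I M G]] .
  have K: "is_group_inverse m (group_inv m)" using group_inv_prop[OF gi_of_m[OF I M G]] .
  let ?P = "\<lambda>x. x * (a * s g * m) = x * (m * (a*a))"
  have bwd: "s a = m \<and> m = g" if xin: "x \<in> {a, g, m, s a, s m, s g, mp_inv s g, group_inv m}" and eq: "?P x" for x
  proof -
    have cA: "?P a \<Longrightarrow> ?thesis"
    proof -
      assume "?P a"
      hence "a*a*s g*m = a*m*a*a" by (simp add: mult.assoc)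
      thus ?thesis using coreA[OF I M G] m1(1) by simp
    qed
    have cM: "?P m \<Longrightarrow> ?thesis"
    proof -
      assume "?P m"
      hence "a*(m*(a * s g * m)) = a*(m*(m * (a*a)))" by simp
      hence "(a*m*a) * s g * m = a*m*m*a*a" by (simp add: mult.assoc)
      thus ?thesis using coreM[OF I M G] m1(1) by simp
    qed
    consider "x = a" | "x = g" | "x = m" | "x = s a" | "x = s m" | "x = s g" | "x = mp_inv s g" | "x = group_inv m"
      using xin by blast
    then show ?thesis
    proof cases
      case 1 thus ?thesis using eq cA by simp
    next
      case 2
      hence "a*a*(g*(a * s g * m)) = a*a*(g*(m * (a*a)))" using eq by simp
      hence "(a*a*g)*(a * s g * m) = (a*a*g)*(m * (a*a))" by (simp add: mult.assoc)
      thus ?thesis using cA bf(10) by simp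
    next
      case 3 thus ?thesis using eq cM by simp
    next
      case 4
      hence "s m*(s a*(a * s g * m)) = s m*(s a*(m * (a*a)))" using eq by simp
      hence "(s m * s a)*(a * s g * m) = (s m * s a)*(m * (a*a))" by (simp add: mult.assoc)
      hence "?P (a*m)" using bf(6) by simp
      hence "a*(m*(a * s g * m)) = a*(m*(m * (a*a)))" by (simp add: mult.assoc)
      hence "(a*m*a) * s g * m = a*m*m*a*a" by (simp add: mult.assoc)
      thus ?thesis using coreM[OF I M G] m1(1) by simp
    next
      case 5
      hence "s a*(s m*(a * s g * m)) = s a*(s m*(m * (a*a)))" using eq by simp
      hence "(s a * s m)*(a * s g * m) = (s a * s m)*(m * (a*a))" by (simp add: mult.assoc)
      hence "?P (m*a)" using bf(7) by simp
      hence "a*(m*a*(a * s g * m)) = a*(m*a*(m * (a*a)))" by simp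
      hence "(a*m*a)*(a * s g * m) = (a*m*a)*m * (a*a)" by (simp add: mult.assoc)
      moreover have "a*m*(a*a) = (a*m*a)*a" by (simp add: mult.assoc)
      ultimately have "a*(a * s g * m) = a*a" using m1 by simp
      moreover have "a*(m*(a*a)) = (a*m*a)*a" by (simp add: mult.assoc)
      ultimately have "?P a" using m1(1) by simp
      thus ?thesis using cA by simp
    next
      case 6
      hence "s a * s a*(s g*(a * s g * m)) = s a * s a*(s g*(m * (a*a)))" using eq by simp
      hence "(s a * s a * s g)*(a * s g * m) = (s a * s a * s g)*(m * (a*a))" by (simp add: mult.assoc)
      moreover have "s a * s a * s g = s a"
      proof -
        have "s (g*(a*a)) = s a * s a * s g" using sm by simp
        moreover have "g*(a*a) = a" using bf(9) by (simp add: mult.assoc)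
        ultimately show ?thesis by simp
      qed
      ultimately have "s m * (s a*(a * s g * m)) = s m * (s a*(m * (a*a)))" by simp
      hence "(s m * s a)*(a * s g * m) = (s m * s a)*(m * (a*a))" by (simp add: mult.assoc)
      hence "?P (a*m)" using bf(6) by simp
      hence "a*(m*(a * s g * m)) = a*(m*(m * (a*a)))" by (simp add: mult.assoc)
      hence "(a*m*a) * s g * m = a*m*m*a*a" by (simp add: mult.assoc)
      thus ?thesis using coreM[OF I M G] m1(1) by simp
    next
      case 7
      define h where "h = mp_inv s g"
      have h1: "g*h*g = g" "h*g*h = h" "s (g*h) = g*h" "s (h*g) = h*g" using H unfolding is_mp_inverse_def h_def by auto
      have gha: "g*h*a = a"
      proof -
        have "g*h*a = g*h*(g*a*a)" using bf(9) by simp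
        also have "\<dots> = (g*h*g)*a*a" by (simp add: mult.assoc)
        finally show ?thesis using h1(1) bf(9) by simp
      qed
      have ggh: "g*h = (a*g*g)*h" by (subst bf(12)[symmetric]) (rule refl)
      have "a*m*(g*h) = (a*m*a)*g*g*h" by (subst ggh) (simp add: mult.assoc)
      also have "\<dots> = g*h" using m1(1) ggh by (simp add: mult.assoc)
      finally have amgh: "a*m*(g*h) = g*h" .
      have "g*h = s (a*m*(g*h))" using amgh h1(3) by simp
      also have "\<dots> = g*h*(a*m)" using sm[of "a*m" "g*h"] h1(3) m1(3) by simp
      also have "\<dots> = a*m" using gha by (simp add: mult.assoc[symmetric])
      finally have gh: "g*h = a*m" .
      have "g*(h*(a * s g * m)) = g*(h*(m * (a*a)))" using eq 7 h_def by simp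
      hence "(g*h)*(a * s g * m) = (g*h)*(m * (a*a))" by (simp add: mult.assoc)
      hence "?P (a*m)" using gh by simp
      hence "a*(m*(a * s g * m)) = a*(m*(m * (a*a)))" by (simp add: mult.assoc)
      hence "(a*m*a) * s g * m = a*m*m*a*a" by (simp add: mult.assoc)
      thus ?thesis using coreM[OF I M G] m1(1) by simp
    next
      case 8
      define k where "k = group_inv m"
      have k1: "m*k*m = m" "k*m*k = k" "m*k = k*m" using K unfolding is_group_inverse_def k_def by auto
      have "m*m*k = m*(m*k)" by (simp only: mult.assoc)
      also have "\<dots> = m*(k*m)" by (simp only: k1(3))
      also have "\<dots> = m*k*m" by (simp only: mult.assoc)
      finally have "m*m*k = m*k*m" .
      hence mmk: "m*m*k = m" using k1(1) by simp
      have "m*m*(k*(a * s g * m)) = m*m*(k*(m * (a*a)))" using eq 8 k_def by simp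
      hence "(m*m*k)*(a * s g * m) = (m*m*k)*(m * (a*a))" by (simp add: mult.assoc)
      hence "?P m" using mmk by simp
      thus ?thesis using cM by simp
    qed
  qed
  show ?thesis
  proof
    assume "SEP s a"
    hence sa: "s a = m" and mg: "m = g" using sep by auto
    have sg: "s g = a" using sa mg inv_ss[OF I, of a] by simp
    have "a*(a * s g * m) = a*(a*a*g)" using sg mg by (simp add: mult.assoc)
    also have "\<dots> = a*a" using bf(10) by simp
    finally have l: "a*(a * s g * m) = a*a" .
    have "a*(m*(a*a)) = (a*m*a)*a" by (simp add: mult.assoc)
    hence "a*(m*(a*a)) = a*a" using m1(1) by simp
    hence "?P a" using l by simp
    thus "\<exists>x\<in>{a, group_inv a, mp_inv s a, s a, s (mp_inv s a), s (group_inv a),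
           mp_inv s (group_inv a), group_inv (mp_inv s a)}.
       left_equiv x (a * s (group_inv a) * mp_inv s a) (mp_inv s a * a ^ 2)"
      unfolding left_equiv_def m_def g_def by (auto simp: power2_eq_square)
  next
    assume "\<exists>x\<in>{a, group_inv a, mp_inv s a, s a, s (mp_inv s a), s (group_inv a),
           mp_inv s (group_inv a), group_inv (mp_inv s a)}.
       left_equiv x (a * s (group_inv a) * mp_inv s a) (mp_inv s a * a ^ 2)"
    then obtain x where "x \<in> {a, g, m, s a, s m, s g, mp_inv s g, group_inv m}" "?P x"
      unfolding left_equiv_def m_def g_def by (auto simp: power2_eq_square)
    thus "SEP s a" using bwd sep by blast
  qed
qed

end
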